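(* Let $p$ be a prime and let $\widetilde{\mathcal{C}}$ be an $[n+k,n+k-m]$ linear code over $\mathbb{F}_p$ with parity check matrix $\widetilde{H}\in\mathbb{F}_p^{m\times(n+k)}$ (so $\widetilde{\mathcal{C}}^\perp$ is the row space of $\widetilde{H}$) of the form $$\widetilde{H} = \begin{pmatrix} -\mathbb{1}_k & \operatorname{H}_1\\ 0 & \operatorname{H}_0\end{pmatrix},$$ where $\mathbb{1}_k$ is the $k\times k$ identity and $\operatorname{H}_1\in\mathbb{F}_p^{k\times n}$, $\operatorname{H}_0\in\mathbb{F}_p^{(m-k)\times n}$. Suppose $\widetilde{\mathcal{C}}^\perp$ is triply-even and contains the all-ones vector. Then the matrix $\operatorname{H} = \begin{pmatrix}\operatorname{H}_1\\ \operatorname{H}_0\end{pmatrix}$, with rows $h^1,\dots,h^m$ (the first $k$ being the rows of $\operatorname{H}_1$), is tri-orthogonal. Furthermore, for all $1\le a\le k$, $\epsilon_a := \sum_i (h^a_i)^3 = 1\pmod p$ and $\sum_i (h^a_i)^2 = -1\pmod p$.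
   Context: A subspace $\mathcal{V}\subseteq\mathbb{F}_p^N$ is triply-even if $\sum_i u_iv_iw_i = 0\pmod p$ for all $u,v,w\in\mathcal{V}$. A matrix with rows $h^1,\dots,h^m\in\mathbb{F}_p^n$ is tri-orthogonal if $\sum_i h^a_ih^b_i = 0\pmod p$ for all $1\le a<b\le m$ and $\sum_i h^a_ih^b_ih^c_i = 0\pmod p$ for all $1\le a<b<c\le m$. *)

theory Defs
  imports Main "HOL-Computational_Algebra.Primes"
begin

text \<open>Vectors in F^N are functions nat => 'a, with coordinates 0..N-1 (zero outside).
  Matrices with r rows and N columns are functions nat => nat => 'a, row index first.\<close>

definition row_space :: "nat \<Rightarrow> nat \<Rightarrow> (nat \<Rightarrow> nat \<Rightarrow> 'a::field) \<Rightarrow> (nat \<Rightarrow> 'a) set" where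
  "row_space r N M = {(\<lambda>i. if i < N then (\<Sum>j<r. c j * M j i) else 0) | c. True}"

definition triply_even :: "nat \<Rightarrow> (nat \<Rightarrow> 'a::field) set \<Rightarrow> bool" where
  "triply_even N V \<longleftrightarrow> (\<forall>u\<in>V. \<forall>v\<in>V. \<forall>w\<in>V. (\<Sum>i<N. u i * v i * w i) = 0)"

definition tri_orthogonal :: "nat \<Rightarrow> nat \<Rightarrow> (nat \<Rightarrow> nat \<Rightarrow> 'a::field) \<Rightarrow> bool" where
  "tri_orthogonal r n h \<longleftrightarrow>
     (\<forall>a b. a < b \<and> b < r \<longrightarrow> (\<Sum>i<n. h a i * h b i) = 0) \<and>
     (\<forall>a b c. a < b \<and> b < c \<and> c < r \<longrightarrow> (\<Sum>i<n. h a i * h b i * h c i) = 0)"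

definition ones_vec :: "nat \<Rightarrow> nat \<Rightarrow> 'a::field" where
  "ones_vec N = (\<lambda>i. if i < N then 1 else 0)"

text \<open>The block matrix (-1_k  H1 ; 0  H0) of size m x (n+k), where H (m x n) has rows
  H1 (rows 0..k-1) stacked over H0 (rows k..m-1).\<close>
definition tilde_H :: "nat \<Rightarrow> (nat \<Rightarrow> nat \<Rightarrow> 'a::field) \<Rightarrow> nat \<Rightarrow> nat \<Rightarrow> 'a" where
  "tilde_H k H = (\<lambda>j i. if i < k then (if i = j then -1 else 0) else H j (i - k))"

definition rows_lin_indep :: "nat \<Rightarrow> nat \<Rightarrow> (nat \<Rightarrow> nat \<Rightarrow> 'a::field) \<Rightarrow> bool" where
  "rows_lin_indep r N M \<longleftrightarrow>
     (\<forall>c. (\<forall>i<N. (\<Sum>j<r. c j * M j i) = 0) \<longrightarrow> (\<forall>j<r. c j = 0))"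

end

theory Submission
  imports Defs
begin

lemma sum_split_nk: "(\<Sum>i<n+(k::nat). f i) = (\<Sum>i<k. f i) + (\<Sum>i<n. f (i+k))"
  by (induction n) (auto simp: add.assoc add.commute add.left_commute)

lemma row_in:
  fixes M :: "nat \<Rightarrow> nat \<Rightarrow> 'a::field"
  assumes "a < r"
  shows "(\<lambda>i. if i < N then M a i else 0) \<in> row_space r N M"
proof -
  have "(\<lambda>i. if i < N then M a i else 0) = (\<lambda>i. if i < N then (\<Sum>j<r. (if j = a then 1 else 0) * M j i) else 0)"
  proof (rule ext)
    fix i
    have "(\<Sum>j<r. (if j = a then 1 else 0) * M j i) = (\<Sum>j<r. if j = a then M j i else 0)"
      by (rule sum.cong) auto
    then show "(if i < N then M a i else 0) = (if i < N then (\<Sum>j<r. (if j = a then 1 else 0) * M j i) else 0)"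
      using assms by simp
  qed
  then show ?thesis unfolding row_space_def by (intro CollectI exI[of _ "\<lambda>j. if j = a then 1 else 0"]) simp
qed

lemma sum_delta2:
  fixes a b :: nat
  shows "(\<Sum>i<k. (if i = a then -1 else 0) * (if i = b then -1 else (0::'a::field))) = (if a = b \<and> a < k then 1 else 0)"
proof -
  have "(\<Sum>i<k. (if i = a then -1 else 0) * (if i = b then -1 else (0::'a::field))) = (\<Sum>i<k. if i = a then (if a = b then 1 else 0) else 0)"
    by (rule sum.cong) auto
  then show ?thesis by simp
qed

lemma sum_delta3:
  fixes a b c :: nat
  shows "(\<Sum>i<k. (if i = a then -1 else 0) * (if i = b then -1 else 0) * (if i = c then -1 else (0::'a::field))) = (if a = b \<and> b = c \<and> a < k then -1 else 0)"
proof -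
  have "(\<Sum>i<k. (if i = a then -1 else 0) * (if i = b then -1 else 0) * (if i = c then -1 else (0::'a::field))) = (\<Sum>i<k. if i = a then (if a = b \<and> b = c then -1 else 0) else 0)"
    by (rule sum.cong) auto
  then show ?thesis by simp
qed

theorem lemma4:
  fixes p :: nat and n k m :: nat and H :: "nat \<Rightarrow> nat \<Rightarrow> 'a::{finite,field}"
  assumes "prime p" and "card (UNIV :: 'a set) = p"
    and "k \<le> m"
    and "rows_lin_indep m (n + k) (tilde_H k H)"
    and "triply_even (n + k) (row_space m (n + k) (tilde_H k H))"
    and "ones_vec (n + k) \<in> row_space m (n + k) (tilde_H k H)"
  shows "tri_orthogonal m n H \<and>
    (\<forall>a<k. (\<Sum>i<n. H a i ^ 3) = 1 \<and> (\<Sum>i<n. H a i ^ 2) = -1)"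
proof -
  define T where "T = tilde_H k H"
  define g where "g a = (\<lambda>i. if i < n + k then T a i else 0)" for a
  have gin: "a < m \<Longrightarrow> g a \<in> row_space m (n + k) T" for a
    unfolding g_def by (rule row_in)
  have te: "(\<Sum>i<n+k. u i * v i * w i) = 0" if "u \<in> row_space m (n + k) T" "v \<in> row_space m (n + k) T" "w \<in> row_space m (n + k) T" for u v w
    using assms(5) that unfolding triply_even_def T_def by blast
  have one: "ones_vec (n + k) \<in> row_space m (n + k) T" using assms(6) T_def by simp
  have T1: "(\<Sum>i<n+k. T a i * T b i * T c i) = (if a = b \<and> b = c \<and> a < k then -1 else 0) + (\<Sum>i<n. H a i * H b i * H c i)" for a b c
    unfolding sum_split_nk sum_delta3[symmetric] by (simp add: T_def tilde_H_def)
  have T2: "(\<Sum>i<n+k. T a i * T b i) = (if a = b \<and> a < k then 1 else 0) + (\<Sum>i<n. H a i * H b i)" for a b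
    unfolding sum_split_nk sum_delta2[symmetric] by (simp add: T_def tilde_H_def)
  have E3: "(\<Sum>i<n+k. T a i * T b i * T c i) = 0" if "a < m" "b < m" "c < m" for a b c
  proof -
    have "(\<Sum>i<n+k. g a i * g b i * g c i) = 0" using te gin that by blast
    moreover have "(\<Sum>i<n+k. g a i * g b i * g c i) = (\<Sum>i<n+k. T a i * T b i * T c i)"
      by (rule sum.cong) (auto simp: g_def)
    ultimately show ?thesis by simp
  qed
  have E2: "(\<Sum>i<n+k. T a i * T b i) = 0" if "a < m" "b < m" for a b
  proof -
    have "(\<Sum>i<n+k. g a i * g b i * ones_vec (n+k) i) = 0" using te gin one that by blast
    moreover have "(\<Sum>i<n+k. g a i * g b i * ones_vec (n+k) i) = (\<Sum>i<n+k. T a i * T b i)"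
      by (rule sum.cong) (auto simp: g_def ones_vec_def)
    ultimately show ?thesis by simp
  qed
  have "tri_orthogonal m n H"
    unfolding tri_orthogonal_def
  proof (intro conjI allI impI)
    fix a b assume "a < b \<and> b < m"
    then show "(\<Sum>i<n. H a i * H b i) = 0" using E2[of a b] T2[of a b] by simp
  next
    fix a b c assume "a < b \<and> b < c \<and> c < m"
    then show "(\<Sum>i<n. H a i * H b i * H c i) = 0" using E3[of a b c] T1[of a b c] by simp
  qed
  moreover have "(\<Sum>i<n. H a i ^ 3) = 1 \<and> (\<Sum>i<n. H a i ^ 2) = -1" if "a < k" for a
  proof
    have "-1 + (\<Sum>i<n. H a i * H a i * H a i) = 0" using E3[of a a a] T1[of a a a] that assms(3) by simp
    then show "(\<Sum>i<n. H a i ^ 3) = 1" by (simp add: power3_eq_cube add_eq_0_iff)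
  next
    have "1 + (\<Sum>i<n. H a i * H a i) = 0" using E2[of a a] T2[of a a] that assms(3) by simp
    then show "(\<Sum>i<n. H a i ^ 2) = -1" by (simp add: power2_eq_square add_eq_0_iff)
  qed
  ultimately show ?thesis by blast
qed

end
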